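(* In the setting of the context, for the functions $S,E,I,R$ defined there, \[ S'(\infty)=E'(\infty)=I'(\infty)=R'(\infty)=0, \] where $f'(\infty):=\lim_{t\to\infty}f'(t)$.
   Context: Let $\beta,\gamma,\delta>0$ be constants and $\tilde S,\tilde E,\tilde I,\tilde R$ real numbers with $N:=\tilde S+\tilde E+\tilde I+\tilde R>0$. Standing assumptions: (A1) $\tilde I>0$; (A2) $\tilde E>(\gamma/\delta)\tilde I$; (A3) $\tilde S>\delta\tilde E/(\beta\tilde I)$; (A4) $\tilde R\ge 0$ and $N>\tilde S e^{(\beta/\gamma)\tilde R}+\tilde R$. Let $\alpha$ be the unique solution in $(\tilde R,N)$ of $x=N-\tilde S e^{(\beta/\gamma)\tilde R}e^{-(\beta/\gamma)x}$, and assume (A5) $\tilde S<(\gamma/\beta)e^{(\beta/\gamma)(\alpha-\tilde R)}$. Put $u_0:=e^{-(\beta/\gamma)\tilde R}$, $u_\infty:=e^{-(\beta/\gamma)\alpha}$. Let $\psi$ be the unique function, continuous and positive on $(u_\infty,u_0]$ and $C^1$ on $(u_\infty,u_0)$, satisfying $\psi'(u)\psi(u)-\frac{\gamma+\delta}{u}\psi(u)=-\delta\,\frac{\beta N-\beta\tilde S e^{(\beta/\gamma)\tilde R}u+\gamma\log u}{u}$ on $(u_\infty,u_0)$ and $\psi(u_0)=\beta\tilde I$. Let $\varphi(u):=\int_u^{u_0}\frac{d\xi}{\xi\psi(\xi)}$; $\varphi$ is a strictly decreasing continuous bijection from $(u_\infty,u_0]$ onto $[0,\infty)$, $C^1$ on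 $(u_\infty,u_0)$, with inverse $\varphi^{-1}:[0,\infty)\to(u_\infty,u_0]$. For $t\ge 0$ define $S(t)=\tilde S e^{(\beta/\gamma)\tilde R}\varphi^{-1}(t)$, $E(t)=\tilde E e^{-\delta t}+\tilde S e^{(\beta/\gamma)\tilde R}e^{-\delta t}\int_{\varphi^{-1}(t)}^{u_0}e^{\delta\varphi(v)}dv$, $I(t)=N-\tilde S e^{(\beta/\gamma)\tilde R}\varphi^{-1}(t)+\frac{\gamma}{\beta}\log\varphi^{-1}(t)-E(t)$, $R(t)=-\frac{\gamma}{\beta}\log\varphi^{-1}(t)$. *)

theory Defs
  imports "HOL-Analysis.Analysis"
begin

definition seir_phi :: "(real \<Rightarrow> real) \<Rightarrow> real \<Rightarrow> real \<Rightarrow> real" where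
  "seir_phi \<psi> u0 u = integral {u..u0} (\<lambda>\<xi>. 1 / (\<xi> * \<psi> \<xi>))"

definition seir_phiinv :: "(real \<Rightarrow> real) \<Rightarrow> real \<Rightarrow> real \<Rightarrow> real \<Rightarrow> real" where
  "seir_phiinv \<psi> uinf u0 = inv_into {uinf<..u0} (seir_phi \<psi> u0)"

end

theory Submission
  imports Defs
begin

theorem theorem13:
  fixes \<beta> \<gamma> \<delta> St Et It Rt \<alpha> :: real and \<psi> :: "real \<Rightarrow> real"
    and S E I R :: "real \<Rightarrow> real"
  assumes "\<beta> > 0" and "\<gamma> > 0" and "\<delta> > 0" and "St + Et + It + Rt > 0"
    and A1: "It > 0"
    and A2: "Et > (\<gamma> / \<delta>) * It"
    and A3: "St > \<delta> * Et / (\<beta> * It)"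
    and A4: "Rt \<ge> 0" "St + Et + It + Rt > St * exp ((\<beta> / \<gamma>) * Rt) + Rt"
    and alpha: "Rt < \<alpha>" "\<alpha> < St + Et + It + Rt"
      "\<alpha> = (St + Et + It + Rt) - St * exp ((\<beta> / \<gamma>) * Rt) * exp (- (\<beta> / \<gamma>) * \<alpha>)"
    and A5: "St < (\<gamma> / \<beta>) * exp ((\<beta> / \<gamma>) * (\<alpha> - Rt))"
    and psi_cont: "continuous_on {exp (- (\<beta> / \<gamma>) * \<alpha>)<..exp (- (\<beta> / \<gamma>) * Rt)} \<psi>"
    and psi_pos: "\<forall>u\<in>{exp (- (\<beta> / \<gamma>) * \<alpha>)<..exp (- (\<beta> / \<gamma>) * Rt)}. \<psi> u > 0"
    and psi_diff: "\<psi> differentiable_on {exp (- (\<beta> / \<gamma>) * \<alpha>)<..<exp (- (\<beta> / \<gamma>) * Rt)}"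
    and psi_C1: "continuous_on {exp (- (\<beta> / \<gamma>) * \<alpha>)<..<exp (- (\<beta> / \<gamma>) * Rt)} (deriv \<psi>)"
    and psi_ode: "\<forall>u\<in>{exp (- (\<beta> / \<gamma>) * \<alpha>)<..<exp (- (\<beta> / \<gamma>) * Rt)}.
                   deriv \<psi> u * \<psi> u - (\<gamma> + \<delta>) / u * \<psi> u
                   = - \<delta> * (\<beta> * (St + Et + It + Rt) - \<beta> * St * exp ((\<beta> / \<gamma>) * Rt) * u
                            + \<gamma> * ln u) / u"
    and psi_init: "\<psi> (exp (- (\<beta> / \<gamma>) * Rt)) = \<beta> * It"
    and S_def: "\<And>t. S t = St * exp ((\<beta> / \<gamma>) * Rt)
                  * seir_phiinv \<psi> (exp (- (\<beta> / \<gamma>) * \<alpha>)) (exp (- (\<beta> / \<gamma>) * Rt)) t"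
    and E_def: "\<And>t. E t = Et * exp (- \<delta> * t)
                 + St * exp ((\<beta> / \<gamma>) * Rt) * exp (- \<delta> * t)
                   * integral {seir_phiinv \<psi> (exp (- (\<beta> / \<gamma>) * \<alpha>)) (exp (- (\<beta> / \<gamma>) * Rt)) t
                               ..exp (- (\<beta> / \<gamma>) * Rt)}
                       (\<lambda>v. exp (\<delta> * seir_phi \<psi> (exp (- (\<beta> / \<gamma>) * Rt)) v))"
    and I_def: "\<And>t. I t = (St + Et + It + Rt)
                 - St * exp ((\<beta> / \<gamma>) * Rt)
                   * seir_phiinv \<psi> (exp (- (\<beta> / \<gamma>) * \<alpha>)) (exp (- (\<beta> / \<gamma>) * Rt)) t
                 + (\<gamma> / \<beta>) * ln (seir_phiinv \<psi> (exp (- (\<beta> / \<gamma>) * \<alpha>)) (exp (- (\<beta> / \<gamma>) * Rt)) t)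
                 - E t"
    and R_def: "\<And>t. R t = - (\<gamma> / \<beta>)
                 * ln (seir_phiinv \<psi> (exp (- (\<beta> / \<gamma>) * \<alpha>)) (exp (- (\<beta> / \<gamma>) * Rt)) t)"
  shows "(\<forall>t>0. S differentiable (at t) \<and> E differentiable (at t)
                \<and> I differentiable (at t) \<and> R differentiable (at t))
         \<and> (deriv S \<longlongrightarrow> 0) at_top \<and> (deriv E \<longlongrightarrow> 0) at_top
         \<and> (deriv I \<longlongrightarrow> 0) at_top \<and> (deriv R \<longlongrightarrow> 0) at_top"
proof -
  define N where "N = St + Et + It + Rt"
  define K where "K = St * exp ((\<beta> / \<gamma>) * Rt)"
  define ui where "ui = exp (- (\<beta> / \<gamma>) * \<alpha>)"
  define u0 where "u0 = exp (- (\<beta> / \<gamma>) * Rt)"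
  define g where "g = (\<lambda>\<xi>::real. 1 / (\<xi> * \<psi> \<xi>))"
  define \<phi> where "\<phi> = seir_phi \<psi> u0"
  define u where "u = seir_phiinv \<psi> ui u0"
  define F where "F = (\<lambda>v::real. \<beta> * N - \<beta> * K * v + \<gamma> * ln v)"
  define G where "G = (\<lambda>v. F v - \<psi> v)"
  have bg: "\<beta> / \<gamma> > 0" using assms(1,2) by simp
  have Et_pos: "Et > 0" using A2 A1 assms(2,3) by (smt (verit) divide_pos_pos mult_pos_pos)
  have St_pos: "St > 0" using A3 Et_pos A1 assms(1,3)
    by (smt (verit) divide_pos_pos mult_pos_pos)
  have K_pos: "K > 0" unfolding K_def using St_pos by simp
  have ui_pos: "ui > 0" unfolding ui_def by simp
  have u0_pos: "u0 > 0" unfolding u0_def by simp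
  have ui_u0: "ui < u0" unfolding ui_def u0_def using alpha(1) assms(1,2)
    by (simp add: divide_strict_right_mono mult_strict_left_mono)
  have ln_ui: "ln ui = - (\<beta> / \<gamma>) * \<alpha>" unfolding ui_def by simp
  have ln_u0: "ln u0 = - (\<beta> / \<gamma>) * Rt" unfolding u0_def by simp
  have Ku0: "K * u0 = St" unfolding K_def u0_def
    by (simp add: mult.assoc exp_add[symmetric])
  have alpha': "\<alpha> = N - K * ui" using alpha(3) unfolding N_def K_def ui_def by simp
  have gba: "\<gamma> * (- (\<beta> / \<gamma>) * \<alpha>) = - \<beta> * \<alpha>" using assms(2) by simp
  have F_ui: "F ui = 0" unfolding F_def ln_ui gba
    by (simp add: alpha' algebra_simps)
  have F_u0: "F u0 = \<beta> * (Et + It)" unfolding F_def ln_u0 using Ku0 assms(1,2)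
    by (simp add: algebra_simps N_def)
  have G_u0: "G u0 = \<beta> * Et" unfolding G_def F_u0 using psi_init
    by (simp add: u0_def algebra_simps)
  have S_eq: "\<And>t. S t = K * u t"
    unfolding K_def u_def ui_def u0_def by (rule S_def)
  have R_eq: "\<And>t. R t = - (\<gamma> / \<beta>) * ln (u t)"
    unfolding u_def ui_def u0_def by (rule R_def)
  have I_eq: "\<And>t. I t = N - K * u t + (\<gamma> / \<beta>) * ln (u t) - E t"
    unfolding N_def K_def u_def ui_def u0_def by (rule I_def)
  have E_eq: "\<And>t. E t = Et * exp (- \<delta> * t) + K * exp (- \<delta> * t)
                 * integral {u t..u0} (\<lambda>v. exp (\<delta> * \<phi> v))"
    unfolding \<phi>_def K_def u_def ui_def u0_def by (rule E_def)
  have psi_cont': "continuous_on {ui<..u0} \<psi>" using psi_cont unfolding ui_def u0_def .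
  have psi_pos': "\<And>v. v \<in> {ui<..u0} \<Longrightarrow> \<psi> v > 0" using psi_pos unfolding ui_def u0_def by blast
  have psi_der: "\<And>v. v \<in> {ui<..<u0} \<Longrightarrow> (\<psi> has_real_derivative deriv \<psi> v) (at v)"
  proof -
    fix v assume v: "v \<in> {ui<..<u0}"
    have "\<psi> differentiable (at v)"
      using psi_diff v differentiable_on_eq_differentiable_at[of "{ui<..<u0}" \<psi>]
      unfolding ui_def u0_def by auto
    then show "(\<psi> has_real_derivative deriv \<psi> v) (at v)"
      using DERIV_deriv_iff_real_differentiable by blast
  qed
  have ode: "\<And>v. v \<in> {ui<..<u0} \<Longrightarrow> deriv \<psi> v * \<psi> v = (\<gamma> + \<delta>) / v * \<psi> v - \<delta> * F v / v"
  proof -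
    fix v assume v: "v \<in> {ui<..<u0}"
    have "deriv \<psi> v * \<psi> v - (\<gamma> + \<delta>) / v * \<psi> v
                   = - \<delta> * (\<beta> * N - \<beta> * St * exp ((\<beta> / \<gamma>) * Rt) * v + \<gamma> * ln v) / v"
      using psi_ode v unfolding ui_def u0_def N_def by blast
    then show "deriv \<psi> v * \<psi> v = (\<gamma> + \<delta>) / v * \<psi> v - \<delta> * F v / v"
      unfolding F_def K_def by (simp add: algebra_simps diff_divide_distrib)
  qed
  have F_cont: "continuous_on {ui<..u0} F"
    unfolding F_def using ui_pos by (intro continuous_intros) auto
  have G_cont: "continuous_on {ui<..u0} G"
    unfolding G_def using F_cont psi_cont' by (intro continuous_intros)
  have F_der: "\<And>v. v > 0 \<Longrightarrow> (F has_real_derivative (- \<beta> * K + \<gamma> / v)) (at v)"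
    unfolding F_def by (rule derivative_eq_intros refl | simp add: field_simps)+
  have G_der: "\<And>v. v \<in> {ui<..<u0} \<Longrightarrow> (G has_real_derivative (- \<beta> * K + \<delta> * G v / (v * \<psi> v))) (at v)"
  proof -
    fix v assume v: "v \<in> {ui<..<u0}"
    have vp: "v > 0" and pp: "\<psi> v > 0" using v ui_pos psi_pos'[of v] by auto
    have d: "(G has_real_derivative (- \<beta> * K + \<gamma> / v - deriv \<psi> v)) (at v)"
      unfolding G_def using F_der[OF vp] psi_der[OF v] by (intro derivative_intros)
    have "deriv \<psi> v = ((\<gamma> + \<delta>) / v * \<psi> v - \<delta> * F v / v) / \<psi> v"
      using ode[OF v] pp by (simp add: field_simps)
    then have eq: "- \<beta> * K + \<gamma> / v - deriv \<psi> v = - \<beta> * K + \<delta> * G v / (v * \<psi> v)"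
      using vp pp unfolding G_def by (simp add: field_simps)
    show "(G has_real_derivative (- \<beta> * K + \<delta> * G v / (v * \<psi> v))) (at v)"
      by (subst eq[symmetric]) (rule d)
  qed
  have G_pos: "\<And>v. v \<in> {ui<..u0} \<Longrightarrow> G v > 0"
  proof (rule ccontr)
    fix v1 assume v1: "v1 \<in> {ui<..u0}" and nG: "\<not> G v1 > 0"
    define Z where "Z = {v1..u0} \<inter> G -` {..0}"
    have sub: "{v1..u0} \<subseteq> {ui<..u0}" using v1 by auto
    have "closed Z" unfolding Z_def
      by (rule continuous_closed_preimage) (use G_cont sub continuous_on_subset in auto)
    moreover have "Z = {v1..u0} \<inter> Z" unfolding Z_def by auto
    ultimately have cZ: "compact Z" using compact_Int_closed[OF compact_Icc, of Z v1 u0] by simp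
    have "v1 \<in> Z" unfolding Z_def using v1 nG by auto
    then obtain s where sZ: "s \<in> Z" and smax: "\<And>w. w \<in> Z \<Longrightarrow> w \<le> s"
      using compact_attains_sup[OF cZ] by blast
    have s1: "v1 \<le> s" "s \<le> u0" "G s \<le> 0" using sZ unfolding Z_def by auto
    have "s \<noteq> u0" using s1(3) G_u0 Et_pos assms(1)
      by (auto simp: mult_le_0_iff)
    then have sI: "s \<in> {ui<..<u0}" using s1 v1 by auto
    have sp: "s > 0" "\<psi> s > 0" using sI ui_pos psi_pos'[of s] by auto
    have "\<delta> * G s / (s * \<psi> s) \<le> 0" using s1(3) sp assms(3)
      by (simp add: divide_nonpos_pos mult_nonneg_nonpos)
    moreover have "\<beta> * K > 0" using assms(1) K_pos by simp
    ultimately have neg: "- \<beta> * K + \<delta> * G s / (s * \<psi> s) < 0" by linarith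
    obtain d where d: "d > 0" "\<And>h. h > 0 \<Longrightarrow> h < d \<Longrightarrow> G s > G (s + h)"
      using DERIV_neg_dec_right[OF G_der[OF sI] neg] by blast
    define h where "h = min (d / 2) (u0 - s)"
    have h: "h > 0" "h < d" "s + h \<le> u0" using d(1) sI unfolding h_def by auto
    have "G (s + h) < 0" using d(2)[OF h(1,2)] s1(3) by simp
    then have "s + h \<in> Z" unfolding Z_def using h s1 by auto
    then show False using smax h(1) by fastforce
  qed
  define C where "C = \<gamma> / ui - \<beta> * K"
  have F_le: "\<And>v. v > 0 \<Longrightarrow> F v \<le> C * (v - ui)"
  proof -
    fix v :: real assume vp: "v > 0"
    have "ln (v / ui) \<le> v / ui - 1" using vp ui_pos by (intro ln_le_minus_one) simp
    then have "ln v - ln ui \<le> v / ui - 1" using vp ui_pos by (simp add: ln_div)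
    then have "\<gamma> * (ln v - ln ui) \<le> \<gamma> * (v / ui - 1)" using assms(2) by simp
    moreover have "F v = F v - F ui" using F_ui by simp
    moreover have "F v - F ui = - \<beta> * K * (v - ui) + \<gamma> * (ln v - ln ui)"
      unfolding F_def by (simp add: algebra_simps)
    moreover have "C * (v - ui) = - \<beta> * K * (v - ui) + \<gamma> * (v / ui - 1)"
      unfolding C_def using ui_pos by (simp add: field_simps)
    ultimately show "F v \<le> C * (v - ui)" by linarith
  qed
  have psi_lt: "\<psi> v < C * (v - ui)" if v: "v \<in> {ui<..u0}" for v
  proof -
    have "G v > 0" using G_pos[OF v] .
    moreover have "F v \<le> C * (v - ui)" using F_le[of v] v ui_pos by auto
    ultimately show ?thesis unfolding G_def by linarith
  qed
  have C_pos: "C > 0"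
  proof -
    have u0I: "u0 \<in> {ui<..u0}" using ui_u0 by simp
    have "0 < C * (u0 - ui)" using psi_lt[OF u0I] psi_pos'[OF u0I] by linarith
    then show ?thesis using ui_u0 by (simp add: zero_less_mult_iff)
  qed
  have g_cont: "continuous_on {ui<..u0} g"
    unfolding g_def using psi_cont' psi_pos' ui_pos
    by (intro continuous_intros) (auto simp: less_imp_neq[symmetric])
  have g_pos: "\<And>v. v \<in> {ui<..u0} \<Longrightarrow> g v > 0"
    unfolding g_def using psi_pos' ui_pos by auto
  have g_int: "\<And>a b. ui < a \<Longrightarrow> b \<le> u0 \<Longrightarrow> g integrable_on {a..b}"
    by (rule integrable_continuous_interval, rule continuous_on_subset[OF g_cont]) auto
  have phi_split: "\<And>c x. ui < c \<Longrightarrow> x \<in> {c..u0} \<Longrightarrow>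
      \<phi> x = integral {c..u0} g - integral {c..x} g"
  proof -
    fix c x assume c: "ui < c" and x: "x \<in> {c..u0}"
    have "integral {c..x} g + integral {x..u0} g = integral {c..u0} g"
      by (rule Henstock_Kurzweil_Integration.integral_combine) (use x g_int[OF c order_refl] in auto)
    then show "\<phi> x = integral {c..u0} g - integral {c..x} g"
      unfolding \<phi>_def seir_phi_def g_def by simp
  qed
  have phi_cont: "\<And>c. ui < c \<Longrightarrow> continuous_on {c..u0} \<phi>"
  proof -
    fix c assume c: "ui < c"
    have "continuous_on {c..u0} (\<lambda>x. integral {c..u0} g - integral {c..x} g)"
      using indefinite_integral_continuous_1[OF g_int[OF c order_refl]]
      by (intro continuous_intros)
    then show "continuous_on {c..u0} \<phi>"
      by (rule continuous_on_eq) (use phi_split c in auto)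
  qed
  have phi_der: "\<And>v. v \<in> {ui<..<u0} \<Longrightarrow> (\<phi> has_real_derivative (- g v)) (at v)"
  proof -
    fix v assume v: "v \<in> {ui<..<u0}"
    define c where "c = (ui + v) / 2"
    have c: "ui < c" "c < v" using v unfolding c_def by auto
    have "((\<lambda>x. integral {c..x} g) has_real_derivative g v) (at v within {c..u0})"
      using v c by (intro integral_has_real_derivative continuous_on_subset[OF g_cont]) auto
    then have "((\<lambda>x. integral {c..x} g) has_real_derivative g v) (at v)"
      using at_within_Icc_at[of c v u0] c v by auto
    then have "((\<lambda>x. integral {c..u0} g - integral {c..x} g) has_real_derivative (0 - g v)) (at v)"
      by (intro derivative_intros)
    then have "((\<lambda>x. integral {c..u0} g - integral {c..x} g) has_real_derivative (- g v)) (at v)"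
      by simp
    then show "(\<phi> has_real_derivative (- g v)) (at v)"
      by (rule has_field_derivative_transform_within_open[where S="{c<..<u0}"])
         (use c v phi_split[OF c(1)] in auto)
  qed
  have phi_u0: "\<phi> u0 = 0" unfolding \<phi>_def seir_phi_def by simp
  have phi_nonneg: "\<And>v. v \<in> {ui<..u0} \<Longrightarrow> \<phi> v \<ge> 0"
  proof -
    fix v assume v: "v \<in> {ui<..u0}"
    have "0 \<le> integral {v..u0} g"
    proof (rule integral_nonneg)
      show "g integrable_on {v..u0}" using v g_int by auto
      fix x assume "x \<in> {v..u0}"
      then have "g x > 0" using v g_pos by auto
      then show "0 \<le> g x" by simp
    qed
    then show "\<phi> v \<ge> 0" unfolding \<phi>_def seir_phi_def g_def by simp
  qed
  have phi_strict: "\<And>x y. ui < x \<Longrightarrow> x < y \<Longrightarrow> y \<le> u0 \<Longrightarrow> \<phi> y < \<phi> x"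
  proof -
    have a: "\<phi> y < \<phi> x" if "ui < x" "x < y" "y < u0" for x y
      by (rule DERIV_neg_imp_decreasing[OF that(2)])
         (use that phi_der g_pos in \<open>fastforce intro!: exI[of _ "- g _"]\<close>)
    fix x y assume xy: "ui < x" "x < y" "y \<le> u0"
    show "\<phi> y < \<phi> x"
    proof (cases "y < u0")
      case True then show ?thesis using a xy by auto
    next
      case False
      then have "y = u0" using xy by auto
      moreover have "\<phi> ((x + u0) / 2) < \<phi> x" using a[of x "(x + u0) / 2"] xy by auto
      moreover have "\<phi> ((x + u0) / 2) \<ge> 0" using phi_nonneg xy by auto
      ultimately show ?thesis using phi_u0 by auto
    qed
  qed
  define u1 where "u1 = (ui + u0) / 2"
  have u1: "ui < u1" "u1 < u0" using ui_u0 unfolding u1_def by auto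
  have uC_pos: "u0 * C > 0" using u0_pos C_pos by simp
  have phi_lower: "\<And>v. ui < v \<Longrightarrow> v \<le> u1 \<Longrightarrow>
      \<phi> v \<ge> (ln (u1 - ui) - ln (v - ui)) / (u0 * C)"
  proof -
    fix v assume v: "ui < v" "v \<le> u1"
    define L where "L = (\<lambda>z. \<phi> z + ln (z - ui) / (u0 * C))"
    have "L v \<ge> L u1"
    proof (rule DERIV_nonpos_imp_nonincreasing[OF v(2)])
      fix z assume z: "v \<le> z" "z \<le> u1"
      have zI: "z \<in> {ui<..<u0}" using z v u1 by auto
      have zI': "z \<in> {ui<..u0}" using zI by auto
      have zp: "z > 0" "\<psi> z > 0" using zI ui_pos psi_pos'[OF zI'] by auto
      have d0: "((\<lambda>z. ln (z - ui)) has_real_derivative inverse (z - ui) * 1) (at z)"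
        by (rule DERIV_chain2[OF DERIV_ln]) (use zI in \<open>auto intro!: derivative_eq_intros\<close>)
      have "((\<lambda>z. ln (z - ui) / (u0 * C)) has_real_derivative inverse (z - ui) / (u0 * C)) (at z)"
        using DERIV_cdivide[OF d0, of "u0 * C"] by simp
      then have d: "(L has_real_derivative (- g z + inverse (z - ui) / (u0 * C))) (at z)"
        unfolding L_def by (intro DERIV_add phi_der zI)
      have "z * \<psi> z \<le> u0 * (C * (z - ui))"
        using psi_lt[OF zI'] zI zp by (intro mult_mono) auto
      then have "1 / (u0 * (C * (z - ui))) \<le> 1 / (z * \<psi> z)"
        using zp u0_pos C_pos zI by (intro divide_left_mono mult_pos_pos) auto
      moreover have "inverse (z - ui) / (u0 * C) = 1 / (u0 * (C * (z - ui)))"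
        using zI by (simp add: divide_inverse mult_ac)
      ultimately have "inverse (z - ui) / (u0 * C) \<le> g z"
        unfolding g_def by simp
      then show "\<exists>y. (L has_real_derivative y) (at z) \<and> y \<le> 0"
        using d by (intro exI[of _ "- g z + inverse (z - ui) / (u0 * C)"]) auto
    qed
    moreover have "\<phi> u1 \<ge> 0" using phi_nonneg u1 by auto
    ultimately show "\<phi> v \<ge> (ln (u1 - ui) - ln (v - ui)) / (u0 * C)"
      unfolding L_def by (simp add: diff_divide_distrib)
  qed
  have phi_big: "\<And>T. \<exists>v. ui < v \<and> v \<le> u1 \<and> \<phi> v \<ge> T"
  proof -
    fix T :: real
    define M where "M = max T 0"
    define v where "v = ui + (u1 - ui) * exp (- M * (u0 * C))"
    have M: "M \<ge> 0" "M \<ge> T" unfolding M_def by auto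
    have e: "exp (- M * (u0 * C)) \<le> 1" using M uC_pos by simp
    have v1: "ui < v" using u1 unfolding v_def by simp
    have "(u1 - ui) * exp (- M * (u0 * C)) \<le> u1 - ui" using u1 e by (intro mult_left_le) auto
    then have v2: "v \<le> u1" unfolding v_def by linarith
    have "ln (v - ui) = ln (u1 - ui) - M * (u0 * C)"
      unfolding v_def using u1 by (simp add: ln_mult)
    then have "(ln (u1 - ui) - ln (v - ui)) / (u0 * C) = M" using u0_pos C_pos by simp
    then have "\<phi> v \<ge> T" using phi_lower[OF v1 v2] M by linarith
    then show "\<exists>v. ui < v \<and> v \<le> u1 \<and> \<phi> v \<ge> T" using v1 v2 by blast
  qed
  have phi_surj: "\<And>t. t \<ge> 0 \<Longrightarrow> t \<in> \<phi> ` {ui<..u0}"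
  proof -
    fix t :: real assume t: "t \<ge> 0"
    obtain v where v: "ui < v" "v \<le> u1" "\<phi> v \<ge> t" using phi_big by blast
    obtain x where x: "v \<le> x" "x \<le> u0" "\<phi> x = t"
      using IVT2'[of \<phi> u0 t v] phi_u0 t v u1 phi_cont[OF v(1)] by auto
    then show "t \<in> \<phi> ` {ui<..u0}" using v by force
  qed
  have inj: "inj_on \<phi> {ui<..u0}"
  proof (rule inj_onI)
    fix x y assume x: "x \<in> {ui<..u0}" and y: "y \<in> {ui<..u0}" and e: "\<phi> x = \<phi> y"
    show "x = y"
    proof (rule linorder_cases[of x y])
      assume "x < y" then show ?thesis using phi_strict[of x y] x y e by auto
    next
      assume "y < x" then show ?thesis using phi_strict[of y x] x y e by auto
    qed
  qed
  have u_alt: "u = inv_into {ui<..u0} \<phi>"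
    unfolding u_def seir_phiinv_def \<phi>_def ..
  have u_in: "\<And>t. t \<ge> 0 \<Longrightarrow> u t \<in> {ui<..u0}"
    unfolding u_alt using phi_surj by (intro inv_into_into) auto
  have phi_u: "\<And>t. t \<ge> 0 \<Longrightarrow> \<phi> (u t) = t"
    unfolding u_alt using phi_surj by (intro f_inv_into_f) auto
  have u_phi: "\<And>v. v \<in> {ui<..u0} \<Longrightarrow> u (\<phi> v) = v"
    unfolding u_alt using inj by (intro inv_into_f_f) auto
  have u_lt: "\<And>t. t > 0 \<Longrightarrow> u t < u0"
  proof -
    fix t :: real assume t: "t > 0"
    have "u t \<noteq> u0" using phi_u[of t] t phi_u0 by auto
    then show "u t < u0" using u_in[of t] t by auto
  qed
  have u_der: "\<And>t. t > 0 \<Longrightarrow> (u has_real_derivative (- (u t * \<psi> (u t)))) (at t)"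
  proof -
    fix t :: real assume t: "t > 0"
    define x where "x = u t"
    have xI: "x \<in> {ui<..<u0}" using u_in[of t] u_lt[OF t] t unfolding x_def by auto
    have xp: "x > 0" "\<psi> x > 0" using xI ui_pos psi_pos'[of x] by auto
    define d where "d = min (x - ui) (u0 - x) / 2"
    have d: "d > 0" using xI unfolding d_def by auto
    have zI: "z \<in> {ui<..<u0}" if zz: "\<bar>z - x\<bar> \<le> d" for z
    proof -
      have "d \<le> (x - ui) / 2" "d \<le> (u0 - x) / 2" unfolding d_def by auto
      then show ?thesis using xI abs_le_D1[OF zz] abs_le_D2[OF zz] by auto
    qed
    have "isCont u (\<phi> x)"
    proof (rule isCont_inverse_function[where f=\<phi> and g=u and x=x, OF d])
      fix z assume "\<bar>z - x\<bar> \<le> d"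
      then have z: "z \<in> {ui<..<u0}" using zI by blast
      show "u (\<phi> z) = z" using u_phi z by auto
    next
      fix z assume "\<bar>z - x\<bar> \<le> d"
      then have z: "z \<in> {ui<..<u0}" using zI by blast
      show "isCont \<phi> z" using phi_der[OF z] by (rule DERIV_isCont)
    qed
    then have cont: "isCont u t" using phi_u[of t] t unfolding x_def by simp
    have "(u has_real_derivative inverse (- g x)) (at t)"
    proof (rule DERIV_inverse_function[where a=0 and b="t+1"])
      show "(\<phi> has_real_derivative - g x) (at (u t))" using phi_der[OF xI] unfolding x_def .
      show "- g x \<noteq> 0" using g_pos[of x] xI by auto
      show "\<And>y. 0 < y \<Longrightarrow> y < t + 1 \<Longrightarrow> \<phi> (u y) = y" using phi_u by auto
    qed (use t cont in auto)
    moreover have "inverse (- g x) = - (x * \<psi> x)" unfolding g_def by simp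
    ultimately show "(u has_real_derivative (- (u t * \<psi> (u t)))) (at t)"
      unfolding x_def by simp
  qed
  have u_lim: "(u \<longlongrightarrow> ui) at_top"
  proof (rule tendstoI)
    fix e :: real assume e: "e > 0"
    define w where "w = min (ui + e / 2) u0"
    have w: "ui < w" "w \<le> u0" "w < ui + e" using e ui_u0 unfolding w_def by auto
    have "\<forall>t\<ge>\<phi> w + 1. dist (u t) ui < e"
    proof (intro allI impI)
      fix t assume t: "t \<ge> \<phi> w + 1"
      have t0: "t > 0" using t phi_nonneg[of w] w by auto
      have ut: "u t \<in> {ui<..u0}" "\<phi> (u t) = t" using u_in phi_u t0 by auto
      have "u t < w"
      proof (rule ccontr)
        assume "\<not> u t < w"
        then have "u t = w \<or> w < u t" by auto
        then have "\<phi> (u t) \<le> \<phi> w" using phi_strict[of w "u t"] w ut by auto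
        then show False using ut t by auto
      qed
      then show "dist (u t) ui < e" using ut w by (simp add: dist_real_def)
    qed
    then show "\<forall>\<^sub>F t in at_top. dist (u t) ui < e"
      unfolding eventually_at_top_linorder by blast
  qed
  have dif: "\<And>f D x. (f has_real_derivative D) (at x) \<Longrightarrow> f differentiable (at x)"
    by (metis has_field_derivative_imp_has_derivative differentiableI)
  have xI: "\<And>t. t > 0 \<Longrightarrow> u t \<in> {ui<..<u0}" using u_in u_lt by fastforce
  have E_id: "\<And>t. t > 0 \<Longrightarrow> E t = G (u t) / \<beta>"
  proof -
    fix t :: real assume t: "t > 0"
    define x where "x = u t"
    have x: "ui < x" "x < u0" "\<phi> x = t" using xI[OF t] phi_u[of t] t unfolding x_def by auto
    define H where "H = (\<lambda>w. exp (\<delta> * \<phi> w) * G w / \<beta>)"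
    define e where "e = (\<lambda>w. exp (\<delta> * \<phi> w))"
    have Hder: "(H has_real_derivative (- K * e w)) (at w)" if w: "w \<in> {x<..<u0}" for w
    proof -
      have wI: "w \<in> {ui<..<u0}" using w x by auto
      have wp: "w > 0" "\<psi> w > 0" using wI ui_pos psi_pos'[of w] by auto
      have d1: "((\<lambda>w. exp (\<delta> * \<phi> w)) has_real_derivative exp (\<delta> * \<phi> w) * (\<delta> * - g w)) (at w)"
        by (rule DERIV_chain2[OF DERIV_exp DERIV_cmult[OF phi_der[OF wI]]])
      have d2: "(H has_real_derivative
          (exp (\<delta> * \<phi> w) * (\<delta> * - g w) * G w + (- \<beta> * K + \<delta> * G w / (w * \<psi> w)) * exp (\<delta> * \<phi> w)) / \<beta>) (at w)"
        unfolding H_def by (intro DERIV_cdivide DERIV_mult d1 G_der wI)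
      have "(exp (\<delta> * \<phi> w) * (\<delta> * - g w) * G w + (- \<beta> * K + \<delta> * G w / (w * \<psi> w)) * exp (\<delta> * \<phi> w)) / \<beta>
            = - K * e w"
        unfolding g_def e_def using wp assms(1) by (simp add: field_simps)
      then show ?thesis using d2 by simp
    qed
    have Hcont: "continuous_on {x..u0} H"
    proof -
      have "continuous_on {x..u0} G" using G_cont by (rule continuous_on_subset) (use x in auto)
      then show ?thesis unfolding H_def using phi_cont[OF x(1)] assms(1)
        by (intro continuous_intros) auto
    qed
    have "((\<lambda>w. - K * e w) has_integral (H u0 - H x)) {x..u0}"
      by (rule fundamental_theorem_of_calculus_interior_strong[where S="{}"])
         (use x Hcont Hder in \<open>auto simp: has_real_derivative_iff_has_vector_derivative[symmetric]\<close>)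
    then have "integral {x..u0} (\<lambda>w. - K * e w) = H u0 - H x" by (rule integral_unique)
    then have int: "- K * integral {x..u0} e = H u0 - H x" by simp
    have Hu0: "H u0 = Et" unfolding H_def phi_u0 G_u0 using assms(1) by simp
    have Hx: "H x = exp (\<delta> * t) * G x / \<beta>" unfolding H_def x(3) ..
    have "E t = Et * exp (- \<delta> * t) + exp (- \<delta> * t) * (K * integral {x..u0} e)"
      unfolding E_eq x_def e_def by (simp add: algebra_simps)
    also have "K * integral {x..u0} e = H x - Et" using int Hu0 by (simp add: algebra_simps)
    finally have "E t = exp (- \<delta> * t) * H x" by (simp add: algebra_simps)
    also have "\<dots> = (exp (- \<delta> * t) * exp (\<delta> * t)) * G x / \<beta>" unfolding Hx by simp
    also have "exp (- \<delta> * t) * exp (\<delta> * t) = 1" by (simp add: exp_add[symmetric])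
    finally show "E t = G (u t) / \<beta>" unfolding x_def by simp
  qed
  have I_id: "\<And>t. t > 0 \<Longrightarrow> I t = \<psi> (u t) / \<beta>"
    unfolding I_eq using E_id assms(1) by (simp add: G_def F_def field_simps)
  have dS: "\<And>t. t > 0 \<Longrightarrow> (S has_real_derivative K * (- (u t * \<psi> (u t)))) (at t)"
  proof -
    fix t :: real assume t: "t > 0"
    have "S = (\<lambda>t. K * u t)" using S_eq by auto
    then show "(S has_real_derivative K * (- (u t * \<psi> (u t)))) (at t)"
      using DERIV_cmult[OF u_der[OF t], of K] by simp
  qed
  have dR: "\<And>t. t > 0 \<Longrightarrow> (R has_real_derivative (\<gamma> / \<beta>) * \<psi> (u t)) (at t)"
  proof -
    fix t :: real assume t: "t > 0"
    have up: "u t > 0" using xI[OF t] ui_pos by auto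
    have Req: "R = (\<lambda>t. - (\<gamma> / \<beta>) * ln (u t))" using R_eq by auto
    have d: "((\<lambda>t. - (\<gamma> / \<beta>) * ln (u t)) has_real_derivative
        - (\<gamma> / \<beta>) * (inverse (u t) * (- (u t * \<psi> (u t))))) (at t)"
      by (intro DERIV_cmult DERIV_chain2[OF DERIV_ln[OF up] u_der[OF t]])
    have eq: "- (\<gamma> / \<beta>) * (inverse (u t) * (- (u t * \<psi> (u t)))) = (\<gamma> / \<beta>) * \<psi> (u t)"
      using up by (simp add: field_simps)
    show "(R has_real_derivative (\<gamma> / \<beta>) * \<psi> (u t)) (at t)" using d unfolding Req eq .
  qed
  have dE: "\<And>t. t > 0 \<Longrightarrow> (E has_real_derivative
      (\<beta> * K * u t * \<psi> (u t) - \<delta> * G (u t)) / \<beta>) (at t)"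
  proof -
    fix t :: real assume t: "t > 0"
    have x: "u t \<in> {ui<..<u0}" using xI[OF t] .
    have xp: "u t > 0" "\<psi> (u t) > 0" using x ui_pos psi_pos'[of "u t"] by auto
    have "((\<lambda>t. G (u t) / \<beta>) has_real_derivative
        ((- \<beta> * K + \<delta> * G (u t) / (u t * \<psi> (u t))) * (- (u t * \<psi> (u t)))) / \<beta>) (at t)"
      by (intro DERIV_cdivide DERIV_chain2[OF G_der[OF x] u_der[OF t]])
    moreover have "((- \<beta> * K + \<delta> * G (u t) / (u t * \<psi> (u t))) * (- (u t * \<psi> (u t)))) / \<beta>
        = (\<beta> * K * u t * \<psi> (u t) - \<delta> * G (u t)) / \<beta>"
      using xp assms(1) by (simp add: field_simps)
    ultimately have "((\<lambda>t. G (u t) / \<beta>) has_real_derivative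
        (\<beta> * K * u t * \<psi> (u t) - \<delta> * G (u t)) / \<beta>) (at t)" by simp
    then show "(E has_real_derivative (\<beta> * K * u t * \<psi> (u t) - \<delta> * G (u t)) / \<beta>) (at t)"
      by (rule has_field_derivative_transform_within_open[where S="{0<..}"])
         (use t E_id in auto)
  qed
  have dI: "\<And>t. t > 0 \<Longrightarrow> (I has_real_derivative
      (- (\<gamma> + \<delta>) * \<psi> (u t) + \<delta> * F (u t)) / \<beta>) (at t)"
  proof -
    fix t :: real assume t: "t > 0"
    have x: "u t \<in> {ui<..<u0}" using xI[OF t] .
    have xp: "u t > 0" "\<psi> (u t) > 0" using x ui_pos psi_pos'[of "u t"] by auto
    have d: "((\<lambda>t. \<psi> (u t) / \<beta>) has_real_derivative
        (deriv \<psi> (u t) * (- (u t * \<psi> (u t)))) / \<beta>) (at t)"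
      by (intro DERIV_cdivide DERIV_chain2[OF psi_der[OF x] u_der[OF t]])
    have "deriv \<psi> (u t) * (- (u t * \<psi> (u t))) = - (u t * (deriv \<psi> (u t) * \<psi> (u t)))"
      by (simp add: algebra_simps)
    also have "\<dots> = - (\<gamma> + \<delta>) * \<psi> (u t) + \<delta> * F (u t)"
      unfolding ode[OF x] using xp by (simp add: field_simps)
    finally have eq: "deriv \<psi> (u t) * (- (u t * \<psi> (u t))) = - (\<gamma> + \<delta>) * \<psi> (u t) + \<delta> * F (u t)" .
    have "((\<lambda>t. \<psi> (u t) / \<beta>) has_real_derivative
        (- (\<gamma> + \<delta>) * \<psi> (u t) + \<delta> * F (u t)) / \<beta>) (at t)" using d unfolding eq .
    then show "(I has_real_derivative (- (\<gamma> + \<delta>) * \<psi> (u t) + \<delta> * F (u t)) / \<beta>) (at t)"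
      by (rule has_field_derivative_transform_within_open[where S="{0<..}"])
         (use t I_id in auto)
  qed
  have F_lim: "((\<lambda>t. F (u t)) \<longlongrightarrow> 0) at_top"
  proof -
    have "isCont F ui" using F_der[OF ui_pos] by (rule DERIV_isCont)
    from isCont_tendsto_compose[OF this u_lim] show ?thesis using F_ui by simp
  qed
  have psi_lim: "((\<lambda>t. \<psi> (u t)) \<longlongrightarrow> 0) at_top"
  proof (rule tendsto_sandwich[OF _ _ tendsto_const F_lim])
    have ev0: "\<forall>\<^sub>F t in at_top. t > (0::real)" by (rule eventually_gt_at_top)
    have a: "0 \<le> \<psi> (u t) \<and> \<psi> (u t) \<le> F (u t)" if t: "t > 0" for t
    proof -
      have x: "u t \<in> {ui<..u0}" using u_in t by auto
      show ?thesis using psi_pos'[OF x] G_pos[OF x] unfolding G_def by auto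
    qed
    show "\<forall>\<^sub>F t in at_top. 0 \<le> \<psi> (u t)" by (rule eventually_mono[OF ev0]) (use a in blast)
    show "\<forall>\<^sub>F t in at_top. \<psi> (u t) \<le> F (u t)" by (rule eventually_mono[OF ev0]) (use a in blast)
  qed
  have G_lim: "((\<lambda>t. G (u t)) \<longlongrightarrow> 0) at_top"
    unfolding G_def using tendsto_diff[OF F_lim psi_lim] by simp
  have ev: "\<forall>\<^sub>F t in at_top. t > (0::real)" by (rule eventually_gt_at_top)
  have l1: "(deriv S \<longlongrightarrow> 0) at_top"
  proof -
    have "((\<lambda>t. K * (- (u t * \<psi> (u t)))) \<longlongrightarrow> K * (- (ui * 0))) at_top"
      by (intro tendsto_intros u_lim psi_lim)
    then have "((\<lambda>t. K * (- (u t * \<psi> (u t)))) \<longlongrightarrow> 0) at_top" by simp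
    then show ?thesis
      by (rule Lim_transform_eventually) (rule eventually_mono[OF ev], simp add: DERIV_imp_deriv[OF dS])
  qed
  have l2: "(deriv R \<longlongrightarrow> 0) at_top"
  proof -
    have "((\<lambda>t. (\<gamma> / \<beta>) * \<psi> (u t)) \<longlongrightarrow> (\<gamma> / \<beta>) * 0) at_top"
      by (intro tendsto_intros psi_lim)
    then have "((\<lambda>t. (\<gamma> / \<beta>) * \<psi> (u t)) \<longlongrightarrow> 0) at_top" by simp
    then show ?thesis
      by (rule Lim_transform_eventually) (rule eventually_mono[OF ev], simp add: DERIV_imp_deriv[OF dR])
  qed
  have l3: "(deriv E \<longlongrightarrow> 0) at_top"
  proof -
    have "((\<lambda>t. (\<beta> * K * u t * \<psi> (u t) - \<delta> * G (u t)) / \<beta>) \<longlongrightarrow> (\<beta> * K * ui * 0 - \<delta> * 0) / \<beta>) at_top"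
      using assms(1) by (intro tendsto_intros u_lim psi_lim G_lim) auto
    then have "((\<lambda>t. (\<beta> * K * u t * \<psi> (u t) - \<delta> * G (u t)) / \<beta>) \<longlongrightarrow> 0) at_top" by simp
    then show ?thesis
      by (rule Lim_transform_eventually) (rule eventually_mono[OF ev], simp add: DERIV_imp_deriv[OF dE])
  qed
  have l4: "(deriv I \<longlongrightarrow> 0) at_top"
  proof -
    have "((\<lambda>t. (- (\<gamma> + \<delta>) * \<psi> (u t) + \<delta> * F (u t)) / \<beta>) \<longlongrightarrow> (- (\<gamma> + \<delta>) * 0 + \<delta> * 0) / \<beta>) at_top"
      using assms(1) by (intro tendsto_intros psi_lim F_lim) auto
    then have "((\<lambda>t. (- (\<gamma> + \<delta>) * \<psi> (u t) + \<delta> * F (u t)) / \<beta>) \<longlongrightarrow> 0) at_top" by simp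
    then show ?thesis
      by (rule Lim_transform_eventually) (rule eventually_mono[OF ev], simp add: DERIV_imp_deriv[OF dI])
  qed
  have diffs: "\<forall>t>0. S differentiable (at t) \<and> E differentiable (at t)
                \<and> I differentiable (at t) \<and> R differentiable (at t)"
    using dS dE dI dR dif by blast
  show ?thesis using diffs l1 l2 l3 l4 by blast
qed

end
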